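(* Let $r\ge3$ and $s\ge1$ be integers with $r\le s+1$, and let $g=(r+1)s$ and $d=g+r-s$. Let $\Gamma$ be a chain of $g$ loops with admissible edge lengths, and let $D$ be the $w_0$-reduced vertex avoiding divisor of degree $d$ and rank $r$ corresponding to the standard tableau, in which column $\alpha$ (for $0\le\alpha\le r$) contains $\alpha s+1,\dots,(\alpha+1)s$. Let $\mathcal A$ be any set of multisets of size $3$ in $\{0,\dots,r\}$, and let $b_I$ be real constants such that at every point of $\Gamma$ the minimum $\theta=\min_{I\in\mathcal A}(\psi_I+b_I)$ is attained at least twice. Then $\sigma_s\le3r+s-4$ and $\sigma_{rs}\ge2s+4$.
   Context: Chain of loops: $\Gamma$ has vertices $w_0,\dots,w_g$ and $v_1,\dots,v_{g+1}$. For $1\le k\le g$ there are two edges (top and bottom) of lengths $\ell_k,m_k$ joining $v_k$ and $w_k$, forming the loop $\gamma_k^\circ$. For $0\le k\le g$ a bridge $\beta_k$ of length $n_k$ joins $w_k$ and $v_{k+1}$. The point $u_k$ is the midpoint of $\beta_k$. Admissible edge lengths: - $4g\,m_k<\ell_k\ll\min\{n_{k-1},n_k\}$; - there is no nontrivial relation $\sum c_km_k=0$ with integers $|c_k|\le g+1$; - for $0\le\alpha\le r$, $\sum_{i=\alpha s+1}^{(\alpha+1)s}\ell_i+\sum_{i=\alpha s+1}^{(\alpha+1)s-1}n_i\ll\min\{n_{\alpha s},n_{(\alpha+1)s}\}$. Tableau and lattice path: the tableau determines the lattice path $p_0,\dots,p_g\in\mathbb Z^r$ with $p_0=(r,r-1,\dots,1)$.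 The step $p_t-p_{t-1}$ is $e_j$ if $t$ is in column $j<r$, and $(-1,\dots,-1)$ if $t$ is in column $r$. Functions: $D_i\sim D$ is the unique effective divisor with $\deg_{w_0}D_i=i$ and $\deg_{v_{g+1}}D_i=r-i$, and $\psi_i$ satisfies $D+\operatorname{div}\psi_i=D_i$. The slope of $\psi_i$ on $\beta_t$, going right, is $p_t(i)$, with $p_t(r)=0$. For a multiset $I$, $\psi_I=\sum_{i\in I}\psi_i$, up to a constant. Slopes: $\sigma_k\psi$ is the slope of $\psi$ at $u_k$ going right, and $\sigma_k=\sigma_k\theta$. *)

theory Defs
  imports Complex_Main "HOL-Library.Multiset"
begin

text \<open>Edge lengths are given by functions
  L k = ell_k (top edge of loop k), M k = m_k (bottom edge of loop k),
  N k = n_k (bridge beta_k).  Points of the metric graph are represented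
  canonically: Br k x is the point of the bridge beta_k at distance x from w_k
  (0 <= x <= n_k; Br k 0 = w_k and Br k n_k = v_(k+1));
  Tp k x / Bt k x are interior points of the top / bottom edge of loop k at
  distance x from v_k.\<close>

datatype cpt = Br nat real | Tp nat real | Bt nat real

definition cpoints :: "nat \<Rightarrow> (nat \<Rightarrow> real) \<Rightarrow> (nat \<Rightarrow> real) \<Rightarrow> (nat \<Rightarrow> real) \<Rightarrow> cpt set" where
  "cpoints g L M N =
     {Br k x | k x. k \<le> g \<and> 0 \<le> x \<and> x \<le> N k}
   \<union> {Tp k x | k x. 1 \<le> k \<and> k \<le> g \<and> 0 < x \<and> x < L k}
   \<union> {Bt k x | k x. 1 \<le> k \<and> k \<le> g \<and> 0 < x \<and> x < M k}"

definition wv :: "nat \<Rightarrow> cpt" where "wv k = Br k 0"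
definition vv :: "(nat \<Rightarrow> real) \<Rightarrow> nat \<Rightarrow> cpt" where "vv N k = Br (k - 1) (N (k - 1))"
definition uu :: "(nat \<Rightarrow> real) \<Rightarrow> nat \<Rightarrow> cpt" where "uu N k = Br k (N k / 2)"

datatype cedge = EB nat | ET nat | EM nat

definition cedges :: "nat \<Rightarrow> cedge set" where
  "cedges g = EB ` {0..g} \<union> ET ` {1..g} \<union> EM ` {1..g}"

fun elen :: "(nat \<Rightarrow> real) \<Rightarrow> (nat \<Rightarrow> real) \<Rightarrow> (nat \<Rightarrow> real) \<Rightarrow> cedge \<Rightarrow> real" where
  "elen L M N (EB k) = N k"
| "elen L M N (ET k) = L k"
| "elen L M N (EM k) = M k"

fun emap :: "(nat \<Rightarrow> real) \<Rightarrow> (nat \<Rightarrow> real) \<Rightarrow> (nat \<Rightarrow> real) \<Rightarrow> cedge \<Rightarrow> real \<Rightarrow> cpt" where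
  "emap L M N (EB k) x = Br k x"
| "emap L M N (ET k) x = (if x = 0 then vv N k else if x = L k then wv k else Tp k x)"
| "emap L M N (EM k) x = (if x = 0 then vv N k else if x = M k then wv k else Bt k x)"

definition pl_on :: "real \<Rightarrow> (real \<Rightarrow> real) \<Rightarrow> bool" where
  "pl_on len h \<longleftrightarrow> (\<exists>B. finite B \<and>
     (\<forall>a b. 0 \<le> a \<and> a < b \<and> b \<le> len \<and> {a<..<b} \<inter> B = {} \<longrightarrow>
        (\<exists>c::int. \<forall>x\<in>{a..b}. \<forall>y\<in>{a..b}. h y - h x = of_int c * (y - x))))"

definition rational_fn :: "nat \<Rightarrow> (nat \<Rightarrow> real) \<Rightarrow> (nat \<Rightarrow> real) \<Rightarrow> (nat \<Rightarrow> real) \<Rightarrow> (cpt \<Rightarrow> real) \<Rightarrow> bool" where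
  "rational_fn g L M N f \<longleftrightarrow>
     (\<forall>e\<in>cedges g. pl_on (elen L M N e) (\<lambda>x. f (emap L M N e x)))"

definition rslope :: "(real \<Rightarrow> real) \<Rightarrow> real \<Rightarrow> real" where
  "rslope h x = (THE c. (h has_real_derivative c) (at_right x))"
definition lslope :: "(real \<Rightarrow> real) \<Rightarrow> real \<Rightarrow> real" where
  "lslope h x = (THE c. (h has_real_derivative c) (at_left x))"

text \<open>Order of f at p: sum of the incoming slopes of f over all tangent directions at p
  (so that D + div psi_i = D_i in the paper's convention).\<close>
definition ordf :: "nat \<Rightarrow> (nat \<Rightarrow> real) \<Rightarrow> (nat \<Rightarrow> real) \<Rightarrow> (nat \<Rightarrow> real) \<Rightarrow> (cpt \<Rightarrow> real) \<Rightarrow> cpt \<Rightarrow> real" where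
  "ordf g L M N f p =
    (\<Sum>e\<in>cedges g. \<Sum>x\<in>{x. 0 \<le> x \<and> x \<le> elen L M N e \<and> emap L M N e x = p}.
        (if 0 < x then lslope (\<lambda>y. f (emap L M N e y)) x else 0)
      - (if x < elen L M N e then rslope (\<lambda>y. f (emap L M N e y)) x else 0))"

definition is_divisor :: "nat \<Rightarrow> (nat \<Rightarrow> real) \<Rightarrow> (nat \<Rightarrow> real) \<Rightarrow> (nat \<Rightarrow> real) \<Rightarrow> (cpt \<Rightarrow> int) \<Rightarrow> bool" where
  "is_divisor g L M N D \<longleftrightarrow> finite {p. D p \<noteq> 0} \<and> {p. D p \<noteq> 0} \<subseteq> cpoints g L M N"

definition ddeg :: "(cpt \<Rightarrow> int) \<Rightarrow> int" where
  "ddeg D = (\<Sum>p\<in>{p. D p \<noteq> 0}. D p)"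

definition effective :: "(cpt \<Rightarrow> int) \<Rightarrow> bool" where
  "effective D \<longleftrightarrow> (\<forall>p. 0 \<le> D p)"

definition lin_equiv :: "nat \<Rightarrow> (nat \<Rightarrow> real) \<Rightarrow> (nat \<Rightarrow> real) \<Rightarrow> (nat \<Rightarrow> real) \<Rightarrow> (cpt \<Rightarrow> int) \<Rightarrow> (cpt \<Rightarrow> int) \<Rightarrow> bool" where
  "lin_equiv g L M N D D' \<longleftrightarrow> (\<exists>f. rational_fn g L M N f \<and>
     (\<forall>p\<in>cpoints g L M N. real_of_int (D' p) = real_of_int (D p) + ordf g L M N f p))"

definition rank_at_least :: "nat \<Rightarrow> (nat \<Rightarrow> real) \<Rightarrow> (nat \<Rightarrow> real) \<Rightarrow> (nat \<Rightarrow> real) \<Rightarrow> (cpt \<Rightarrow> int) \<Rightarrow> nat \<Rightarrow> bool" where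
  "rank_at_least g L M N D k \<longleftrightarrow> (\<forall>E. is_divisor g L M N E \<and> effective E \<and> ddeg E = int k \<longrightarrow>
     (\<exists>f. rational_fn g L M N f \<and>
        (\<forall>p\<in>cpoints g L M N. 0 \<le> real_of_int (D p - E p) + ordf g L M N f p)))"

definition has_rank :: "nat \<Rightarrow> (nat \<Rightarrow> real) \<Rightarrow> (nat \<Rightarrow> real) \<Rightarrow> (nat \<Rightarrow> real) \<Rightarrow> (cpt \<Rightarrow> int) \<Rightarrow> nat \<Rightarrow> bool" where
  "has_rank g L M N D k \<longleftrightarrow> rank_at_least g L M N D k \<and> \<not> rank_at_least g L M N D (k + 1)"

text \<open>w_0-reduced divisors (Dhar's criterion in functional form): D is effective away
  from w_0 and whenever D + div f is effective away from w_0, f attains its minimum at w_0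
  (the minimum locus of f is the set that is fired).\<close>
definition w0_reduced :: "nat \<Rightarrow> (nat \<Rightarrow> real) \<Rightarrow> (nat \<Rightarrow> real) \<Rightarrow> (nat \<Rightarrow> real) \<Rightarrow> (cpt \<Rightarrow> int) \<Rightarrow> bool" where
  "w0_reduced g L M N D \<longleftrightarrow>
     (\<forall>p\<in>cpoints g L M N - {wv 0}. 0 \<le> D p) \<and>
     (\<forall>f. rational_fn g L M N f \<and>
          (\<forall>p\<in>cpoints g L M N - {wv 0}. 0 \<le> real_of_int (D p) + ordf g L M N f p)
          \<longrightarrow> (\<forall>x\<in>cpoints g L M N. f (wv 0) \<le> f x))"

definition is_Di :: "nat \<Rightarrow> (nat \<Rightarrow> real) \<Rightarrow> (nat \<Rightarrow> real) \<Rightarrow> (nat \<Rightarrow> real) \<Rightarrow> nat \<Rightarrow> (cpt \<Rightarrow> int) \<Rightarrow> nat \<Rightarrow> (cpt \<Rightarrow> int) \<Rightarrow> bool" where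
  "is_Di g L M N r D i D' \<longleftrightarrow> is_divisor g L M N D' \<and> effective D' \<and> lin_equiv g L M N D D' \<and>
     D' (wv 0) = int i \<and> D' (vv N (g + 1)) = int r - int i"

definition vertex_avoiding :: "nat \<Rightarrow> (nat \<Rightarrow> real) \<Rightarrow> (nat \<Rightarrow> real) \<Rightarrow> (nat \<Rightarrow> real) \<Rightarrow> nat \<Rightarrow> (cpt \<Rightarrow> int) \<Rightarrow> bool" where
  "vertex_avoiding g L M N r D \<longleftrightarrow> (\<forall>i\<le>r.
     (\<exists>!D'. is_Di g L M N r D i D') \<and>
     (\<forall>D'. is_Di g L M N r D i D' \<longrightarrow> (\<forall>k\<in>{1..g}. D' (vv N k) = 0 \<and> D' (wv k) = 0)))"

definition is_psi :: "nat \<Rightarrow> (nat \<Rightarrow> real) \<Rightarrow> (nat \<Rightarrow> real) \<Rightarrow> (nat \<Rightarrow> real) \<Rightarrow> nat \<Rightarrow> (cpt \<Rightarrow> int) \<Rightarrow> nat \<Rightarrow> (cpt \<Rightarrow> real) \<Rightarrow> bool" where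
  "is_psi g L M N r D i f \<longleftrightarrow> rational_fn g L M N f \<and>
     (\<forall>p\<in>cpoints g L M N. 0 \<le> real_of_int (D p) + ordf g L M N f p) \<and>
     real_of_int (D (wv 0)) + ordf g L M N f (wv 0) = real i \<and>
     real_of_int (D (vv N (g + 1))) + ordf g L M N f (vv N (g + 1)) = real r - real i"

text \<open>Lattice path of the standard tableau with column alpha = {alpha*s+1..(alpha+1)*s}:
  t lies in column (t-1) div s.  lp r s t i = p_t(i) for i < r.\<close>
fun lp :: "nat \<Rightarrow> nat \<Rightarrow> nat \<Rightarrow> nat \<Rightarrow> int" where
  "lp r s 0 i = int r - int i"
| "lp r s (Suc t) i = lp r s t i + (if t div s = r then -1 else if i = t div s then 1 else 0)"

definition bslope :: "nat \<Rightarrow> nat \<Rightarrow> nat \<Rightarrow> nat \<Rightarrow> int" where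
  "bslope r s t i = (if i = r then 0 else lp r s t i)"

text \<open>Admissible edge lengths; "a << b" is read as "K * a < b" for a constant K.\<close>
definition admissible :: "nat \<Rightarrow> nat \<Rightarrow> real \<Rightarrow> (nat \<Rightarrow> real) \<Rightarrow> (nat \<Rightarrow> real) \<Rightarrow> (nat \<Rightarrow> real) \<Rightarrow> bool" where
  "admissible r s K L M N \<longleftrightarrow> (let g = (r + 1) * s in
     (\<forall>k\<le>g. 0 < N k) \<and>
     (\<forall>k\<in>{1..g}. 0 < M k \<and> 4 * real g * M k < L k \<and> K * L k < N (k - 1) \<and> K * L k < N k) \<and>
     (\<forall>c::nat \<Rightarrow> int. (\<forall>k\<in>{1..g}. \<bar>c k\<bar> \<le> int g + 1) \<and> (\<Sum>k=1..g. real_of_int (c k) * M k) = 0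
         \<longrightarrow> (\<forall>k\<in>{1..g}. c k = 0)) \<and>
     (\<forall>\<alpha>\<le>r. K * ((\<Sum>i=\<alpha>*s+1..(\<alpha>+1)*s. L i) + (\<Sum>i=\<alpha>*s+1..(\<alpha>+1)*s-1. N i))
                 < min (N (\<alpha>*s)) (N ((\<alpha>+1)*s))))"

text \<open>The w_0-reduced vertex avoiding divisor of degree d and rank r corresponding to the
  standard tableau (tableau read off from the bridge slopes of the psi_i).\<close>
definition tab_divisor :: "nat \<Rightarrow> nat \<Rightarrow> (nat \<Rightarrow> real) \<Rightarrow> (nat \<Rightarrow> real) \<Rightarrow> (nat \<Rightarrow> real) \<Rightarrow> (cpt \<Rightarrow> int) \<Rightarrow> bool" where
  "tab_divisor r s L M N D \<longleftrightarrow> (let g = (r + 1) * s; d = g + r - s in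
     is_divisor g L M N D \<and> ddeg D = int d \<and> w0_reduced g L M N D \<and>
     has_rank g L M N D r \<and> vertex_avoiding g L M N r D \<and>
     (\<forall>i\<le>r. \<forall>f. is_psi g L M N r D i f \<longrightarrow>
        (\<forall>t\<le>g. \<forall>x\<in>{0..N t}. \<forall>y\<in>{0..N t}.
            f (Br t y) - f (Br t x) = of_int (bslope r s t i) * (y - x))))"

definition psiI :: "(nat \<Rightarrow> cpt \<Rightarrow> real) \<Rightarrow> nat multiset \<Rightarrow> cpt \<Rightarrow> real" where
  "psiI \<psi> I p = (\<Sum>i\<in>#I. \<psi> i p)"

definition theta :: "(nat \<Rightarrow> cpt \<Rightarrow> real) \<Rightarrow> nat multiset set \<Rightarrow> (nat multiset \<Rightarrow> real) \<Rightarrow> cpt \<Rightarrow> real" where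
  "theta \<psi> A b p = Min ((\<lambda>I. psiI \<psi> I p + b I) ` A)"

definition min_twice :: "cpt set \<Rightarrow> (nat \<Rightarrow> cpt \<Rightarrow> real) \<Rightarrow> nat multiset set \<Rightarrow> (nat multiset \<Rightarrow> real) \<Rightarrow> bool" where
  "min_twice P \<psi> A b \<longleftrightarrow> (\<forall>p\<in>P. \<exists>I\<in>A. \<exists>J\<in>A. I \<noteq> J \<and>
      psiI \<psi> I p + b I = theta \<psi> A b p \<and> psiI \<psi> J p + b J = theta \<psi> A b p)"

definition sigma :: "(nat \<Rightarrow> real) \<Rightarrow> (cpt \<Rightarrow> real) \<Rightarrow> nat \<Rightarrow> real" where
  "sigma N f k = rslope (\<lambda>x. f (Br k x)) (N k / 2)"

end

theory Submission
  imports Defs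
begin
lemma rslope_eqI:
  assumes "(f has_real_derivative c) (at_right x)"
  shows "rslope f x = c"
  unfolding rslope_def
  apply (rule the_equality)
   apply (rule assms)
  using has_field_derivative_unique assms trivial_limit_at_right_real by blast

lemma slope_min:
  fixes A :: "'a set" and c e :: "'a \<Rightarrow> real" and F :: "real \<Rightarrow> real"
  assumes fin: "finite A" and n: "0 < n"
    and Fdef: "\<forall>x\<in>{0..n}. F x = Min ((\<lambda>I. c I * x + e I) ` A)"
    and tw: "\<forall>x\<in>{0..n}. \<exists>I\<in>A. \<exists>J\<in>A. I \<noteq> J \<and> c I * x + e I = F x \<and> c J * x + e J = F x"
  shows "\<exists>I\<in>A. \<exists>J\<in>A. I \<noteq> J \<and> c I = rslope F (n/2) \<and> c J = rslope F (n/2)"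
proof -
  define x0 where "x0 = n/2"
  have x0: "0 < x0" "x0 < n" using n by (auto simp: x0_def)
  define S0 where "S0 = {I\<in>A. c I * x0 + e I = F x0}"
  have S0ne: "S0 \<noteq> {}" using tw x0 by (force simp: S0_def)
  have S0fin: "finite S0" using fin by (simp add: S0_def)
  define cs where "cs = Min (c ` S0)"
  obtain Is where Is: "Is \<in> S0" "c Is = cs"
  proof -
    have "cs \<in> c ` S0" unfolding cs_def using S0ne S0fin by (intro Min_in) auto
    then show ?thesis using that by auto
  qed
  define g where "g x = c Is * x + e Is" for x
  have Fx0: "\<And>I. I \<in> A \<Longrightarrow> F x0 \<le> c I * x0 + e I"
    using Fdef x0 fin by auto
  have ev: "\<forall>\<^sub>F x in at_right x0. x \<in> {x0<..<n} \<and> (\<forall>I\<in>A. g x \<le> c I * x + e I \<and> (c I * x + e I = g x \<longrightarrow> c I = cs))"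
  proof (intro eventually_conj)
    show "\<forall>\<^sub>F x in at_right x0. x \<in> {x0<..<n}" using eventually_at_right_real x0 by blast
    show "\<forall>\<^sub>F x in at_right x0. \<forall>I\<in>A. g x \<le> c I * x + e I \<and> (c I * x + e I = g x \<longrightarrow> c I = cs)"
    proof (rule eventually_ball_finite[OF fin], rule ballI)
      fix I assume IA: "I \<in> A"
      show "\<forall>\<^sub>F x in at_right x0. g x \<le> c I * x + e I \<and> (c I * x + e I = g x \<longrightarrow> c I = cs)"
      proof (cases "I \<in> S0")
        case True
        have le: "cs \<le> c I" using True S0fin by (auto simp: cs_def)
        have eq: "c I * x0 + e I = g x0" using True Is by (simp add: S0_def g_def)
        show ?thesis
        proof (rule eventually_mono[OF eventually_at_right_less])
          fix x assume "x0 < x"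
          have d: "c I * x + e I - g x = (c I - cs) * (x - x0)"
            using eq Is(2) by (simp add: g_def algebra_simps)
          show "g x \<le> c I * x + e I \<and> (c I * x + e I = g x \<longrightarrow> c I = cs)"
          proof -
            have "0 \<le> (c I - cs) * (x - x0)" using le \<open>x0 < x\<close> by simp
            moreover have "(c I - cs) * (x - x0) = 0 \<Longrightarrow> c I = cs" using \<open>x0 < x\<close> by simp
            ultimately show ?thesis using d by auto
          qed
        qed
      next
        case False
        have gt: "g x0 < c I * x0 + e I"
          using False IA Fx0[OF IA] Is by (auto simp: S0_def g_def)
        have "((\<lambda>x. c I * x + e I - g x) \<longlongrightarrow> c I * x0 + e I - g x0) (at_right x0)"
          unfolding g_def by (intro tendsto_intros)
        from order_tendstoD(1)[OF this, of 0] gt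
        have "\<forall>\<^sub>F x in at_right x0. 0 < c I * x + e I - g x" by simp
        then show ?thesis by (rule eventually_mono) auto
      qed
    qed
  qed
  have evF: "\<forall>\<^sub>F x in at_right x0. F x = g x"
  proof (rule eventually_mono[OF ev])
    fix x assume h: "x \<in> {x0<..<n} \<and> (\<forall>I\<in>A. g x \<le> c I * x + e I \<and> (c I * x + e I = g x \<longrightarrow> c I = cs))"
    have "Min ((\<lambda>I. c I * x + e I) ` A) = g x"
      apply (rule Min_eqI) using fin h Is by (auto simp: S0_def g_def)
    then show "F x = g x" using Fdef h x0 by auto
  qed
  have Fg0: "F x0 = g x0" using Is by (simp add: S0_def g_def)
  have "(g has_real_derivative c Is) (at_right x0)"
    unfolding g_def by (auto intro!: derivative_eq_intros)
  hence "(F has_real_derivative c Is) (at_right x0)"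
    using has_field_derivative_cong_eventually[OF evF Fg0] by simp
  hence rs: "rslope F (n/2) = cs" using rslope_eqI Is x0_def by metis
  obtain x1 where x1: "x1 \<in> {x0<..<n} \<and> (\<forall>I\<in>A. g x1 \<le> c I * x1 + e I \<and> (c I * x1 + e I = g x1 \<longrightarrow> c I = cs))"
    using eventually_happens'[OF _ ev] by auto
  have "F x1 = g x1"
  proof -
    have "Min ((\<lambda>I. c I * x1 + e I) ` A) = g x1"
      apply (rule Min_eqI) using fin x1 Is by (auto simp: S0_def g_def)
    then show ?thesis using Fdef x1 x0 by auto
  qed
  moreover obtain I J where "I\<in>A" "J\<in>A" "I\<noteq>J" "c I * x1 + e I = F x1" "c J * x1 + e J = F x1"
    using tw x1 x0 by (meson greaterThanLessThan_iff atLeastAtMost_iff less_imp_le order.strict_trans)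
  ultimately show ?thesis using x1 rs by metis
qed
lemma mset3: assumes "size (I::nat multiset) = 3"
  shows "\<exists>x y z. x \<le> y \<and> y \<le> z \<and> I = {#x, y, z#}"
proof -
  define xs where "xs = sorted_list_of_multiset I"
  have "mset xs = I" "sorted xs" by (auto simp: xs_def)
  hence l: "length xs = 3" using assms by (metis size_mset)
  then obtain x y z where "xs = [x,y,z]"
    by (auto simp: numeral_3_eq_3 length_Suc_conv)
  thus ?thesis using \<open>mset xs = I\<close> \<open>sorted xs\<close> by (auto simp: add_mset_commute)
qed

lemma arith_aux:
  fixes a s t :: nat and y :: int
  assumes "1 \<le> s"
  shows "y + (if a + s \<le> t then int s else if a \<le> t then int t - int a else 0) + (if a \<le> t \<and> t < a + s then 1 else 0)
     = y + (if a + s \<le> Suc t then int s else if a \<le> Suc t then int (Suc t) - int a else 0)"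
  using assms by auto

lemma lp_formula:
  assumes "i < r" "t \<le> r * s" "1 \<le> s"
  shows "lp r s t i = int r - int i + (if (i+1)*s \<le> t then int s else if i*s \<le> t then int t - int (i*s) else 0)"
  using assms(2)
proof (induction t)
  case 0 then show ?case using assms by auto
next
  case (Suc t)
  have tr: "t < r * s" using Suc by simp
  hence "t div s < r" using assms by (simp add: less_mult_imp_div_less)
  hence ne: "t div s \<noteq> r" by simp
  have iff: "i = t div s \<longleftrightarrow> i*s \<le> t \<and> t < (i+1)*s"
  proof
    assume "i = t div s"
    then show "i*s \<le> t \<and> t < (i+1)*s"
      using div_times_less_eq_dividend[of t s] dividend_less_div_times[of s t] assms(3) by auto
  next
    assume "i*s \<le> t \<and> t < (i+1)*s"
    then show "i = t div s" using div_nat_eqI[of s i t] by (auto simp: mult.commute)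
  qed
  have step: "lp r s (Suc t) i = lp r s t i + (if i*s \<le> t \<and> t < i*s + s then 1 else 0)"
    using ne iff by (simp add: add.commute)
  have IH: "lp r s t i = int r - int i + (if i*s + s \<le> t then int s else if i*s \<le> t then int t - int (i*s) else 0)"
    using Suc tr by (simp add: add.commute)
  have goal: "lp r s (Suc t) i = int r - int i + (if i*s + s \<le> Suc t then int s else if i*s \<le> Suc t then int (Suc t) - int (i*s) else 0)"
    unfolding step IH by (rule arith_aux[OF assms(3)])
  then show ?case by (simp add: add.commute)
qed
lemma comb1:
  fixes x y z x' y' z' r s :: nat
  defines "v \<equiv> \<lambda>i::nat. int r - int i + (if i = 0 then int s else 0)"
  assumes "3 \<le> r" "1 \<le> s" "r \<le> s + 1"
    "x \<le> y" "y \<le> z" "z \<le> r" "x' \<le> y'" "y' \<le> z'" "z' \<le> r"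
    "(x,y,z) \<noteq> (x',y',z')" "v x + v y + v z = v x' + v y' + v z'"
  shows "v x + v y + v z \<le> 3 * int r + int s - 4"
  using assms(2-) unfolding v_def
  by (auto split: if_splits)

lemma comb2:
  fixes x y z x' y' z' r s :: nat
  defines "v \<equiv> \<lambda>i::nat. if i = r then 0 else int r - int i + int s"
  assumes "3 \<le> r" "1 \<le> s" "r \<le> s + 1"
    "x \<le> y" "y \<le> z" "z \<le> r" "x' \<le> y'" "y' \<le> z'" "z' \<le> r"
    "(x,y,z) \<noteq> (x',y',z')" "v x + v y + v z = v x' + v y' + v z'"
  shows "v x + v y + v z \<ge> 2 * int s + 4"
  using assms(2-) unfolding v_def
  by (auto split: if_splits)

lemma bs1:
  assumes "i \<le> r" "3 \<le> r" "1 \<le> s"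
  shows "bslope r s s i = int r - int i + (if i = 0 then int s else 0)"
proof (cases "i = r")
  case True then show ?thesis using assms by (simp add: bslope_def)
next
  case False
  hence ir: "i < r" using assms by simp
  have "s \<le> r * s" using assms by simp
  note lp = lp_formula[OF ir this assms(3)]
  show ?thesis
  proof (cases "i = 0")
    case True then show ?thesis using lp ir by (simp add: bslope_def)
  next
    case False
    then show ?thesis
    proof (cases "i = 1")
      case True then show ?thesis using lp ir by (simp add: bslope_def)
    next
      case False
      hence "2 \<le> i" using \<open>i \<noteq> 0\<close> by simp
      hence "2 * s \<le> i * s" by simp
      hence "\<not> (i+1)*s \<le> s" "\<not> i*s \<le> s" using assms by auto
      then show ?thesis using lp ir \<open>i \<noteq> 0\<close> by (simp add: bslope_def)
    qed
  qed
qed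

lemma bs2:
  assumes "i \<le> r" "3 \<le> r" "1 \<le> s"
  shows "bslope r s (r*s) i = (if i = r then 0 else int r - int i + int s)"
proof (cases "i = r")
  case True then show ?thesis using assms by (simp add: bslope_def)
next
  case False
  hence ir: "i < r" using assms by simp
  note lp = lp_formula[OF ir order.refl assms(3)]
  have "(i+1)*s \<le> r*s" using ir by (intro mult_le_mono1) simp
  then show ?thesis using lp ir by (simp add: bslope_def)
qed

lemma msum_lin:
  assumes "\<forall>i\<in>#I. f i = a i + c i * (x::real)"
  shows "(\<Sum>i\<in>#I. f i) = (\<Sum>i\<in>#I. a i) + (\<Sum>i\<in>#I. c i) * x"
  using assms by (induction I) (auto simp: algebra_simps)

lemma key:
  assumes adm: "admissible r s K L M N" and tab: "tab_divisor r s L M N D"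
    and psi: "\<forall>i\<le>r. is_psi ((r + 1) * s) L M N r D i (\<psi> i)"
    and AA: "A \<subseteq> {I. size I = 3 \<and> set_mset I \<subseteq> {0..r}}"
    and mt: "min_twice (cpoints ((r + 1) * s) L M N) \<psi> A b"
    and t: "t \<le> (r+1)*s"
  shows "\<exists>I\<in>A. \<exists>J\<in>A. I \<noteq> J \<and> (\<Sum>i\<in>#I. real_of_int (bslope r s t i)) = sigma N (theta \<psi> A b) t
        \<and> (\<Sum>i\<in>#J. real_of_int (bslope r s t i)) = sigma N (theta \<psi> A b) t"
proof -
  define g where "g = (r+1)*s"
  have Npos: "0 < N t" using adm t unfolding admissible_def Let_def by auto
  have slopes: "\<forall>i\<le>r. \<forall>x\<in>{0..N t}. \<psi> i (Br t x) = \<psi> i (Br t 0) + of_int (bslope r s t i) * x"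
  proof (intro allI impI ballI)
    fix i x assume i: "i \<le> r" and x: "x \<in> {0..N t}"
    have "\<forall>t\<le>g. \<forall>x\<in>{0..N t}. \<forall>y\<in>{0..N t}.
            \<psi> i (Br t y) - \<psi> i (Br t x) = of_int (bslope r s t i) * (y - x)"
      using tab psi i unfolding tab_divisor_def Let_def g_def by blast
    hence "\<psi> i (Br t x) - \<psi> i (Br t 0) = of_int (bslope r s t i) * (x - 0)"
      using t x Npos unfolding g_def by auto
    thus "\<psi> i (Br t x) = \<psi> i (Br t 0) + of_int (bslope r s t i) * x" by simp
  qed
  define c where "c I = (\<Sum>i\<in>#I. real_of_int (bslope r s t i))" for I
  define e where "e I = psiI \<psi> I (Br t 0) + b I" for I
  define F where "F x = theta \<psi> A b (Br t x)" for x
  have fin: "finite A"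
    using finite_subset[OF AA] finite_multisets_of_size[of "{0..r}" 3]
    unfolding multisets_of_size_def by (simp add: conj_commute)
  have lin: "\<forall>I\<in>A. \<forall>x\<in>{0..N t}. psiI \<psi> I (Br t x) + b I = c I * x + e I"
  proof (intro ballI)
    fix I x assume I: "I \<in> A" and x: "x \<in> {0..N t}"
    have "\<forall>i\<in>#I. \<psi> i (Br t x) = \<psi> i (Br t 0) + of_int (bslope r s t i) * x"
    proof
      fix i assume "i \<in># I"
      hence "i \<le> r" using I AA by fastforce
      thus "\<psi> i (Br t x) = \<psi> i (Br t 0) + of_int (bslope r s t i) * x" using slopes x by blast
    qed
    from msum_lin[OF this] show "psiI \<psi> I (Br t x) + b I = c I * x + e I"
      by (simp add: psiI_def c_def e_def)
  qed
  have Fdef: "\<forall>x\<in>{0..N t}. F x = Min ((\<lambda>I. c I * x + e I) ` A)"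
  proof
    fix x assume x: "x \<in> {0..N t}"
    have "(\<lambda>I. psiI \<psi> I (Br t x) + b I) ` A = (\<lambda>I. c I * x + e I) ` A"
      using lin x by (intro image_cong) auto
    then show "F x = Min ((\<lambda>I. c I * x + e I) ` A)" by (simp add: F_def theta_def)
  qed
  have tw: "\<forall>x\<in>{0..N t}. \<exists>I\<in>A. \<exists>J\<in>A. I \<noteq> J \<and> c I * x + e I = F x \<and> c J * x + e J = F x"
  proof
    fix x assume x: "x \<in> {0..N t}"
    have "Br t x \<in> cpoints ((r + 1) * s) L M N" using x t unfolding cpoints_def by auto
    then obtain I J where "I\<in>A" "J\<in>A" "I \<noteq> J" "psiI \<psi> I (Br t x) + b I = theta \<psi> A b (Br t x)"
      "psiI \<psi> J (Br t x) + b J = theta \<psi> A b (Br t x)"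
      using mt unfolding min_twice_def by blast
    then show "\<exists>I\<in>A. \<exists>J\<in>A. I \<noteq> J \<and> c I * x + e I = F x \<and> c J * x + e J = F x"
      using lin x unfolding F_def by metis
  qed
  from slope_min[OF fin Npos Fdef tw] show ?thesis
    unfolding c_def F_def sigma_def by (simp add: o_def)
qed

lemma part1:
  assumes r: "3 \<le> r" "1 \<le> s" "r \<le> s + 1"
    and I: "size I = 3" "set_mset I \<subseteq> {0..r}" and J: "size J = 3" "set_mset J \<subseteq> {0..r}"
    and IJ: "I \<noteq> J"
    and sI: "(\<Sum>i\<in>#I. real_of_int (bslope r s s i)) = \<sigma>"
    and sJ: "(\<Sum>i\<in>#J. real_of_int (bslope r s s i)) = \<sigma>"
  shows "\<sigma> \<le> 3 * real r + real s - 4"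
proof -
  obtain x y z where xyz: "x \<le> y" "y \<le> z" "I = {#x,y,z#}" using mset3[OF I(1)] by blast
  obtain x' y' z' where xyz': "x' \<le> y'" "y' \<le> z'" "J = {#x',y',z'#}" using mset3[OF J(1)] by blast
  have le: "x \<le> r" "y \<le> r" "z \<le> r" "x' \<le> r" "y' \<le> r" "z' \<le> r" using I J xyz xyz' by auto
  define v where "v = (\<lambda>i::nat. int r - int i + (if i = 0 then int s else 0))"
  have bv: "\<And>i. i \<le> r \<Longrightarrow> bslope r s s i = v i" using bs1 r unfolding v_def by blast
  have eI: "\<sigma> = real_of_int (v x + v y + v z)" using sI xyz le bv by simp
  have eJ: "\<sigma> = real_of_int (v x' + v y' + v z')" using sJ xyz' le bv by simp
  have ne: "(x,y,z) \<noteq> (x',y',z')" using IJ xyz xyz' by auto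
  have "v x + v y + v z \<le> 3 * int r + int s - 4"
    using comb1[OF r xyz(1,2) le(3) xyz'(1,2) le(6) ne] eI eJ unfolding v_def by simp
  then show ?thesis using eI by linarith
qed

lemma part2:
  assumes r: "3 \<le> r" "1 \<le> s" "r \<le> s + 1"
    and I: "size I = 3" "set_mset I \<subseteq> {0..r}" and J: "size J = 3" "set_mset J \<subseteq> {0..r}"
    and IJ: "I \<noteq> J"
    and sI: "(\<Sum>i\<in>#I. real_of_int (bslope r s (r*s) i)) = \<sigma>"
    and sJ: "(\<Sum>i\<in>#J. real_of_int (bslope r s (r*s) i)) = \<sigma>"
  shows "\<sigma> \<ge> 2 * real s + 4"
proof -
  obtain x y z where xyz: "x \<le> y" "y \<le> z" "I = {#x,y,z#}" using mset3[OF I(1)] by blast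
  obtain x' y' z' where xyz': "x' \<le> y'" "y' \<le> z'" "J = {#x',y',z'#}" using mset3[OF J(1)] by blast
  have le: "x \<le> r" "y \<le> r" "z \<le> r" "x' \<le> r" "y' \<le> r" "z' \<le> r" using I J xyz xyz' by auto
  define v where "v = (\<lambda>i::nat. if i = r then 0 else int r - int i + int s)"
  have bv: "\<And>i. i \<le> r \<Longrightarrow> bslope r s (r*s) i = v i" using bs2 r unfolding v_def by blast
  have eI: "\<sigma> = real_of_int (v x + v y + v z)" using sI xyz le bv by simp
  have eJ: "\<sigma> = real_of_int (v x' + v y' + v z')" using sJ xyz' le bv by simp
  have ne: "(x,y,z) \<noteq> (x',y',z')" using IJ xyz xyz' by auto
  have "v x + v y + v z \<ge> 2 * int s + 4"
    using comb2[OF r xyz(1,2) le(3) xyz'(1,2) le(6) ne] eI eJ unfolding v_def by simp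
  then show ?thesis using eI by linarith
qed

theorem lemma6p1:
  fixes r s :: nat
  assumes "3 \<le> r" and "1 \<le> s" and "r \<le> s + 1"
  shows "\<exists>K>0. \<forall>L M N (D :: cpt \<Rightarrow> int) (\<psi> :: nat \<Rightarrow> cpt \<Rightarrow> real)
            (A :: nat multiset set) (b :: nat multiset \<Rightarrow> real).
     admissible r s K L M N \<and> tab_divisor r s L M N D \<and>
     (\<forall>i\<le>r. is_psi ((r + 1) * s) L M N r D i (\<psi> i)) \<and>
     A \<subseteq> {I. size I = 3 \<and> set_mset I \<subseteq> {0..r}} \<and>
     min_twice (cpoints ((r + 1) * s) L M N) \<psi> A b
     \<longrightarrow> sigma N (theta \<psi> A b) s \<le> 3 * real r + real s - 4
       \<and> sigma N (theta \<psi> A b) (r * s) \<ge> 2 * real s + 4"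
proof (rule exI[of _ "1::real"], intro conjI allI impI)
  show "(0::real) < 1" by simp
  fix L M N D \<psi> A b
  assume h: "admissible r s 1 L M N \<and> tab_divisor r s L M N D \<and>
     (\<forall>i\<le>r. is_psi ((r + 1) * s) L M N r D i (\<psi> i)) \<and>
     A \<subseteq> {I. size I = 3 \<and> set_mset I \<subseteq> {0..r}} \<and>
     min_twice (cpoints ((r + 1) * s) L M N) \<psi> A b"
  hence AA: "A \<subseteq> {I. size I = 3 \<and> set_mset I \<subseteq> {0..r}}" by blast
  have t1: "s \<le> (r+1)*s" by simp
  have t2: "r*s \<le> (r+1)*s" by simp
  obtain I J where IJ: "I \<in> A" "J \<in> A" "I \<noteq> J"
    "(\<Sum>i\<in>#I. real_of_int (bslope r s s i)) = sigma N (theta \<psi> A b) s"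
    "(\<Sum>i\<in>#J. real_of_int (bslope r s s i)) = sigma N (theta \<psi> A b) s"
    using key[of r s 1 L M N D \<psi> A b, OF _ _ _ _ _ t1] h by blast
  show "sigma N (theta \<psi> A b) s \<le> 3 * real r + real s - 4"
    using part1[OF assms _ _ _ _ IJ(3-5)] IJ(1,2) AA by blast
  obtain I J where IJ: "I \<in> A" "J \<in> A" "I \<noteq> J"
    "(\<Sum>i\<in>#I. real_of_int (bslope r s (r*s) i)) = sigma N (theta \<psi> A b) (r*s)"
    "(\<Sum>i\<in>#J. real_of_int (bslope r s (r*s) i)) = sigma N (theta \<psi> A b) (r*s)"
    using key[of r s 1 L M N D \<psi> A b, OF _ _ _ _ _ t2] h by blast
  show "sigma N (theta \<psi> A b) (r * s) \<ge> 2 * real s + 4"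
    using part2[OF assms _ _ _ _ IJ(3-5)] IJ(1,2) AA by blast
qed

end
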